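(* Let $0<\rho<\frac{\pi}{6}$, set $\theta_1=0$, $\theta_2=\frac{\pi}{2}+\rho$, $T_1=[\theta_2,\pi]$ and $T_2=[2\rho,\frac{\pi}{2}-\rho]$, and for $p>0$ define $\Delta_p(\theta)=|\cos(\theta-\theta_2)|^p+|\cos(\theta-\theta_1)|^p$. Then: (a) For all $0<p\le 2$ and all $\theta\in T_1$, $\Delta_p(\theta)\ge 1$. (b) For all $0<p\le\frac{\log 3}{\log 2}$ and all $\theta_i\in T_1$, $\theta_j\in T_2$, $\Delta_p(\theta_i)+\Delta_p(\theta_j)\ge 2$. *)

theory Defs
  imports Complex_Main
begin

definition Delta :: "real \<Rightarrow> real \<Rightarrow> real \<Rightarrow> real" where
  "Delta \<rho> p \<theta> = \<bar>cos (\<theta> - (pi/2 + \<rho>))\<bar> powr p + \<bar>cos (\<theta> - 0)\<bar> powr p"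

end

theory Submission
  imports Defs "HOL-Analysis.Convex"
begin

lemma powr_concave:
  assumes "0 < q" "q \<le> 1"
  shows "concave_on {0<..} (\<lambda>x::real. x powr q)"
proof (rule f''_le0_imp_concave[where f' = "\<lambda>x. q * x powr (q - 1)" and f'' = "\<lambda>x. q * ((q - 1) * x powr (q - 1 - 1))"])
  show "convex {0::real<..}" by simp
  fix x :: real assume x: "x \<in> {0<..}"
  then show "((\<lambda>x. x powr q) has_real_derivative q * x powr (q - 1)) (at x)"
    by (auto intro!: derivative_eq_intros)
  show "((\<lambda>x. q * x powr (q - 1)) has_real_derivative q * ((q - 1) * x powr (q - 1 - 1))) (at x)"
    using x by (auto intro!: derivative_eq_intros)
  show "q * ((q - 1) * x powr (q - 1 - 1)) \<le> 0"
    using assms x by (simp add: mult_nonneg_nonpos mult_nonpos_nonneg)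
qed

lemma majorize:
  fixes q m a b :: real
  assumes q: "0 < q" "q \<le> 1" and m: "0 < m" and a: "m \<le> a" "a \<le> 1" and b: "m \<le> b" "b \<le> 1"
    and s: "a + b \<ge> 1 + m"
  shows "a powr q + b powr q \<ge> 1 + m powr q"
proof (cases "m = 1")
  case True then show ?thesis using a b by simp
next
  case False
  then have m1: "m < 1" using a by linarith
  have conc: "concave_on {0<..} (\<lambda>x::real. x powr q)" by (rule powr_concave[OF q])
  have key: "x powr q \<ge> (1 - (1 - x)/(1 - m)) * 1 + ((1 - x)/(1-m)) * m powr q"
    if "m \<le> x" "x \<le> 1" for x
  proof -
    define t where "t = (1 - x)/(1 - m)"
    have t: "0 \<le> t" "t \<le> 1" using that m1 by (auto simp: t_def field_simps)
    have tm: "t * (1 - m) = 1 - x" using m1 by (simp add: t_def)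
    have "x = (1 - t) *\<^sub>R 1 + t *\<^sub>R m" using tm by (simp add: algebra_simps)
    then have "x powr q = ((1 - t) *\<^sub>R 1 + t *\<^sub>R m) powr q" by simp
    also have "\<dots> \<ge> (1 - t) * 1 powr q + t * m powr q"
      using concave_onD[OF conc t, of 1 m] m by simp
    finally show ?thesis by (simp add: t_def)
  qed
  define la where "la = (1 - a)/(1 - m)"
  define lb where "lb = (1 - b)/(1 - m)"
  have ka: "a powr q \<ge> (1 - la) + la * m powr q" using key[OF a] by (simp add: la_def)
  have kb: "b powr q \<ge> (1 - lb) + lb * m powr q" using key[OF b] by (simp add: lb_def)
  have lsum: "la + lb \<le> 1"
  proof -
    have "la + lb = (2 - a - b)/(1 - m)" by (simp add: la_def lb_def add_divide_distrib[symmetric])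
    also have "\<dots> \<le> (1 - m)/(1-m)" using s m1 by (intro divide_right_mono) auto
    finally show ?thesis using m1 by simp
  qed
  have mq: "m powr q \<le> 1" using m1 m q by (simp add: powr_le1)
  have "a powr q + b powr q \<ge> 2 - (la + lb) * (1 - m powr q)"
    using ka kb by (simp add: algebra_simps)
  moreover have "(la + lb) * (1 - m powr q) \<le> 1 * (1 - m powr q)"
    using lsum mq by (intro mult_right_mono) auto
  ultimately show ?thesis by simp
qed

lemma sin_sq_identity:
  fixes A r :: real
  shows "sin A ^ 2 + cos (A - r) ^ 2 = 1 + sin r * sin (2*A - r)"
proof -
  have h1: "sin A ^ 2 + cos A ^ 2 = 1" by simp
  have h2: "sin r ^ 2 + cos r ^ 2 = 1" by simp
  have e1: "cos (A - r) = cos A * cos r + sin A * sin r" by (simp add: cos_diff)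
  have e2: "sin (2*A - r) = 2 * sin A * cos A * cos r - (cos A ^ 2 - sin A ^ 2) * sin r"
    by (simp add: sin_diff sin_double cos_double)
  show ?thesis unfolding e1 e2 using h1 h2 by algebra
qed

lemma sin_ge_sin_rho:
  fixes x r :: real
  assumes "0 \<le> r" "r \<le> x" "x \<le> pi - r"
  shows "sin r \<le> sin x"
proof (cases "x \<le> pi/2")
  case True then show ?thesis using assms by (intro sin_monotone_2pi_le) auto
next
  case False
  have "sin r \<le> sin (pi - x)" using assms False by (intro sin_monotone_2pi_le) auto
  then show ?thesis by simp
qed

lemma gbound:
  fixes p r A B :: real
  assumes p: "0 < p" "p \<le> 2" and r: "0 < r" "r < pi/2"
    and A: "r \<le> A" "A \<le> pi/2" and B: "r \<le> B" "B \<le> pi/2" and AB: "A + B = pi/2 + r"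
  shows "sin A powr p + sin B powr p \<ge> 1 + sin r powr p"
proof -
  have sp: "sin x powr p = (sin x ^ 2) powr (p/2)" if "0 < x" "x < pi" for x
  proof -
    have "sin x > 0" using that by (simp add: sin_gt_zero)
    then have "sin x ^ 2 = sin x powr 2" by (simp add: powr_realpow)
    then show ?thesis by (simp add: powr_powr)
  qed
  have pi_pos: "0 < pi" by simp
  have sr: "0 < sin r" using r by (intro sin_gt_zero) auto
  then have m0: "0 < sin r ^ 2" by simp
  have mA: "sin r ^ 2 \<le> sin A ^ 2"
    using r A sr by (intro power_mono sin_monotone_2pi_le) auto
  have mB: "sin r ^ 2 \<le> sin B ^ 2"
    using r B sr by (intro power_mono sin_monotone_2pi_le) auto
  have A1: "sin A ^ 2 \<le> 1" by (simp add: abs_square_le_1)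
  have B1: "sin B ^ 2 \<le> 1" by (simp add: abs_square_le_1)
  have "pi/2 - B = A - r" using AB by simp
  then have sB: "sin B = cos (A - r)" by (simp add: sin_cos_eq)
  have "sin A ^ 2 + sin B ^ 2 = 1 + sin r * sin (2*A - r)" using sin_sq_identity sB by simp
  moreover have "sin r * sin r \<le> sin r * sin (2*A - r)"
    using r A B AB sr by (intro mult_left_mono sin_ge_sin_rho) auto
  ultimately have sum: "sin A ^ 2 + sin B ^ 2 \<ge> 1 + sin r ^ 2" by (simp add: power2_eq_square)
  have "(sin A ^ 2) powr (p/2) + (sin B ^ 2) powr (p/2) \<ge> 1 + (sin r ^ 2) powr (p/2)"
    using p by (intro majorize m0 mA mB A1 B1 sum) auto
  then show ?thesis using sp[of A] sp[of B] sp[of r] r A B by simp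
qed

lemma sinpow_convex:
  fixes P :: real
  assumes P: "4/3 \<le> P"
  shows "convex_on {0<..pi/6} (\<lambda>x. sin x powr P)"
proof (rule f''_ge0_imp_convex[where f' = "\<lambda>x. P * sin x powr (P - 1) * cos x"
      and f'' = "\<lambda>x. P * ((P - 1) * sin x powr (P - 2) * cos x * cos x - sin x powr (P - 1) * sin x)"])
  show "convex {0<..pi/6}" by simp
  fix x :: real assume x: "x \<in> {0<..pi/6}"
  have sx: "0 < sin x" using x by (intro sin_gt_zero) auto
  show "((\<lambda>x. sin x powr P) has_real_derivative P * sin x powr (P - 1) * cos x) (at x)"
    using sx by (auto intro!: derivative_eq_intros simp: algebra_simps)
  show "((\<lambda>x. P * sin x powr (P - 1) * cos x) has_real_derivative
      P * ((P - 1) * sin x powr (P - 2) * cos x * cos x - sin x powr (P - 1) * sin x)) (at x)"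
    using sx by (auto intro!: derivative_eq_intros simp: algebra_simps)
  have s2: "sin x \<le> 1/2"
  proof -
    have "sin x \<le> sin (pi/6)" using x by (intro sin_monotone_2pi_le) auto
    then show ?thesis by (simp add: sin_30)
  qed
  have "sin x * sin x \<le> (1/2) * (1/2)" using s2 sx by (intro mult_mono) auto
  then have s4: "sin x ^ 2 \<le> 1/4" by (simp add: power2_eq_square)
  have c4: "cos x ^ 2 \<ge> 3/4" using s4 sin_cos_squared_add[of x] by linarith
  have "(1/3) * (3/4) \<le> (P - 1) * cos x ^ 2" using P c4 by (intro mult_mono) auto
  then have cs: "sin x ^ 2 \<le> (P - 1) * cos x ^ 2" using s4 by linarith
  have e: "sin x powr (P - 1) = sin x powr (P - 2) * sin x"
  proof -
    have "sin x powr (P - 1) = sin x powr ((P - 2) + 1)" by simp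
    also have "\<dots> = sin x powr (P - 2) * sin x powr 1" by (rule powr_add)
    finally show ?thesis using sx by simp
  qed
  have "(P - 1) * sin x powr (P - 2) * cos x * cos x - sin x powr (P - 1) * sin x
        = sin x powr (P - 2) * ((P - 1) * cos x ^ 2 - sin x ^ 2)"
    unfolding e power2_eq_square by algebra
  also have "\<dots> \<ge> 0" using cs sx by simp
  finally show "0 \<le> P * ((P - 1) * sin x powr (P - 2) * cos x * cos x - sin x powr (P - 1) * sin x)"
    using P by simp
qed

lemma K_concave:
  fixes P :: real
  assumes "1 \<le> P" "P \<le> 2"
  shows "concave_on {0<..<1} (\<lambda>v. P/2 * ln 2 + (P - 1) * ln v + (1 - P/2) * ln (1 - v))"
proof (rule f''_le0_imp_concave[where f' = "\<lambda>v. (P - 1) / v + (P/2 - 1) / (1 - v)"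
      and f'' = "\<lambda>v. - (P - 1) / v^2 + (P/2 - 1) / (1 - v)^2"])
  show "convex {0::real<..<1}" by simp
  fix x :: real assume x: "x \<in> {0<..<1}"
  show "((\<lambda>v. P/2 * ln 2 + (P - 1) * ln v + (1 - P/2) * ln (1 - v)) has_real_derivative
      (P - 1) / x + (P/2 - 1) / (1 - x)) (at x)"
  proof -
    have a: "((\<lambda>v. (P - 1) * ln v) has_real_derivative (P - 1) / x) (at x)"
      using x by (auto intro!: derivative_eq_intros)
    have b0: "((\<lambda>v. (1 - P/2) * ln (1 - v)) has_real_derivative (1 - P/2) * (- 1 / (1 - x))) (at x)"
      using x by (auto intro!: derivative_eq_intros)
    have e: "(1 - P/2) * (- 1 / (1 - x)) = (P/2 - 1) / (1 - x)" by (simp add: divide_simps) 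
    have b: "((\<lambda>v. (1 - P/2) * ln (1 - v)) has_real_derivative (P/2 - 1) / (1 - x)) (at x)"
      using b0 e by simp
    have c: "((\<lambda>v. P/2 * ln 2) has_real_derivative 0) (at x)" by simp
    show ?thesis using DERIV_add[OF DERIV_add[OF c a] b] by simp
  qed
  show "((\<lambda>v. (P - 1) / v + (P/2 - 1) / (1 - v)) has_real_derivative
      - (P - 1) / x^2 + (P/2 - 1) / (1 - x)^2) (at x)"
  proof -
    have a: "((\<lambda>v. (P - 1) / v) has_real_derivative - (P - 1) / x^2) (at x)"
      using x by (auto intro!: derivative_eq_intros simp: power2_eq_square)
    have b: "((\<lambda>v. (P/2 - 1) / (1 - v)) has_real_derivative (P/2 - 1) / (1 - x)^2) (at x)"
      using x by (auto intro!: derivative_eq_intros simp: power2_eq_square)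
    show ?thesis using DERIV_add[OF a b] by simp
  qed
  have "- (P - 1) / x^2 \<le> 0" using assms by (intro divide_nonpos_nonneg) auto
  moreover have "(P/2 - 1) / (1 - x)^2 \<le> 0" using assms by (intro divide_nonpos_nonneg) auto
  ultimately
  show "- (P - 1) / x^2 + (P/2 - 1) / (1 - x)^2 \<le> 0" by simp
qed

lemma affine_rep:
  fixes a b x :: real
  assumes "a < b"
  shows "x = (1 - (x - a)/(b - a)) *\<^sub>R a + ((x - a)/(b - a)) *\<^sub>R b"
proof -
  define t where "t = (x - a)/(b - a)"
  have h: "t * (b - a) = x - a" using assms by (simp add: t_def)
  have "(1 - t) *\<^sub>R a + t *\<^sub>R b = a + t * (b - a)" by (simp add: algebra_simps)
  then show ?thesis using h unfolding t_def[symmetric] by simp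
qed

lemma Gnonneg:
  fixes P w :: real
  assumes P3: "2 powr P = 3" and P: "4/3 \<le> P" "P \<le> 2" and w: "1/2 \<le> w" "w \<le> 1"
  shows "2 * ((1 - w)/2) powr (P/2) + w powr P \<ge> 1"
proof -
  define G where "G v = 2 * ((1 - v)/2) powr (P/2) + v powr P - 1" for v :: real
  define K where "K v = P/2 * ln 2 + (P - 1) * ln v + (1 - P/2) * ln (1 - v)" for v :: real
  define G' where "G' v = P * v powr (P - 1) - P/2 * ((1 - v)/2) powr (P/2 - 1)" for v :: real
  have half: "(1/2::real) powr P = 1/3" using P3 by (simp add: powr_divide)
  have quarter: "(1/4::real) powr (P/2) = 1/3"
  proof -
    have e: "((1/2::real) powr 2) = 1/4" by (simp add: power2_eq_square)
    have "(1/4::real) powr (P/2) = ((1/2) powr 2) powr (P/2)" by (simp only: e)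
    also have "\<dots> = (1/2) powr (2 * (P/2))" by (rule powr_powr)
    finally have "(1/4::real) powr (P/2) = (1/2) powr P" by simp
    then show ?thesis using half by simp
  qed
  have G12: "G (1/2) = 0" using half quarter by (simp add: G_def)
  have G1: "G 1 = 0" by (simp add: G_def)
  have K12: "K (1/2) = 0" by (simp add: K_def ln_div algebra_simps)
  have dG: "(G has_real_derivative G' v) (at v)" if "0 < v" "v < 1" for v
  proof -
    have a: "((\<lambda>v. 2 * ((1 - v)/2) powr (P/2)) has_real_derivative
        2 * ((P/2) * ((1 - v)/2) powr (P/2 - 1) * (- 1/2))) (at v)"
      using that by (auto intro!: derivative_eq_intros)
    have b: "((\<lambda>v. v powr P) has_real_derivative P * v powr (P - 1)) (at v)"
      using that by (auto intro!: derivative_eq_intros)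
    have "((\<lambda>v. 2 * ((1 - v)/2) powr (P/2) + v powr P - 1) has_real_derivative
        2 * ((P/2) * ((1 - v)/2) powr (P/2 - 1) * (- 1/2)) + P * v powr (P - 1) - 0) (at v)"
      by (intro DERIV_diff DERIV_add a b DERIV_const)
    moreover have "2 * ((P/2) * ((1 - v)/2) powr (P/2 - 1) * (- 1/2)) + P * v powr (P - 1) - 0 = G' v"
      by (simp add: G'_def)
    ultimately show ?thesis unfolding G_def[abs_def] by simp
  qed
  have sign: "G' v \<ge> 0 \<longleftrightarrow> K v \<ge> 0" if "0 < v" "v < 1" for v
  proof -
    define X where "X = P * v powr (P - 1)"
    define Y where "Y = P/2 * ((1 - v)/2) powr (P/2 - 1)"
    have X0: "X > 0" using that P by (simp add: X_def)
    have Y0: "Y > 0" using that P by (simp add: Y_def)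
    have lX: "ln X = ln P + (P - 1) * ln v" using that P by (simp add: X_def ln_mult)
    have lY: "ln Y = ln P - ln 2 + (P/2 - 1) * (ln (1 - v) - ln 2)"
      using that P by (simp add: Y_def ln_mult ln_div)
    have "K v = ln X - ln Y" unfolding lX lY K_def by (simp add: algebra_simps)
    moreover have "G' v = X - Y" by (simp add: G'_def X_def Y_def)
    ultimately show ?thesis using X0 Y0 by (simp add: ln_le_cancel_iff[symmetric] del: ln_le_cancel_iff) 
  qed
  have conc: "concave_on {0<..<1} K"
    using K_concave[of P] P unfolding K_def[abs_def] by simp
  have cont: "continuous_on {1/2..1} G"
  proof -
    have c1: "continuous_on {1/2..1} (\<lambda>v::real. ((1 - v)/2) powr (P/2))"
      using P by (intro continuous_on_powr') (auto intro!: continuous_intros)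
    have c2: "continuous_on {1/2..1} (\<lambda>v::real. v powr P)"
      by (intro continuous_intros) auto
    show ?thesis unfolding G_def[abs_def]
      by (intro continuous_on_diff continuous_on_add continuous_on_mult continuous_on_const c1 c2)
  qed
  show ?thesis
  proof (cases "w = 1")
    case True then show ?thesis using G1 by (simp add: G_def)
  next
    case False
    then have w1: "w < 1" using w by simp
    show ?thesis
    proof (cases "K w \<ge> 0")
      case True
      have "G (1/2) \<le> G w"
      proof (rule DERIV_nonneg_imp_increasing_open[OF w(1)])
        fix v assume v: "1/2 < v" "v < w"
        define t where "t = (v - 1/2)/(w - 1/2)"
        have t: "0 \<le> t" "t \<le> 1" using v by (auto simp: t_def)
        have vt: "v = (1 - t) *\<^sub>R (1/2) + t *\<^sub>R w"
          using v affine_rep[of "1/2" w v] by (simp add: t_def)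
        have "K v \<ge> (1 - t) * K (1/2) + t * K w"
          unfolding vt using concave_onD[OF conc t, of "1/2" w] w1 w by auto
        moreover have "t * K w \<ge> 0" using True t by simp
        ultimately have "K v \<ge> 0" using K12 by simp
        then have "G' v \<ge> 0" using sign[of v] v w1 by simp
        then show "\<exists>y. (G has_real_derivative y) (at v) \<and> 0 \<le> y" using dG[of v] v w1 by auto
      next
        show "continuous_on {1/2..w} G" using w1 by (intro continuous_on_subset[OF cont]) auto
      qed
      then show ?thesis using G12 by (simp add: G_def)
    next
      case False
      then have w2: "1/2 < w" using K12 w by (cases "w = 1/2") auto
      have "G 1 \<le> G w"
      proof (rule DERIV_nonpos_imp_decreasing_open[OF w(2)])
        fix v assume v: "w < v" "v < 1"
        define t where "t = (w - 1/2)/(v - 1/2)"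
        have t: "0 \<le> t" "t \<le> 1" "0 < t" using v w2 by (auto simp: t_def)
        have wt: "w = (1 - t) *\<^sub>R (1/2) + t *\<^sub>R v"
          using v w2 affine_rep[of "1/2" v w] by (simp add: t_def)
        have "K w \<ge> (1 - t) * K (1/2) + t * K v"
          unfolding wt using concave_onD[OF conc t(1,2), of "1/2" v] v w2 by auto
        then have "t * K v < 0" using K12 False by simp
        then have "K v < 0" using t(3) by (simp add: mult_less_0_iff)
        then have "G' v \<le> 0" using sign[of v] v w2 by simp
        then show "\<exists>y. (G has_real_derivative y) (at v) \<and> y \<le> 0" using dG[of v] v w2 by auto
      next
        show "continuous_on {w..1} G" using w by (intro continuous_on_subset[OF cont]) auto
      qed
      then show ?thesis using G1 by (simp add: G_def)
    qed
  qed
qed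

lemma Fbound:
  fixes P y :: real
  assumes P3: "2 powr P = 3" and P: "4/3 \<le> P" "P \<le> 2" and y: "0 < y" "y \<le> pi/6"
  shows "2 * sin y powr P + sin (pi/2 - 2*y) powr P \<ge> 1"
proof -
  have sy: "0 < sin y" using y by (intro sin_gt_zero) auto
  have e1: "sin (pi/2 - 2*y) = cos (2*y)" by (simp add: cos_sin_eq)
  have w1: "cos (2*y) \<le> 1" by simp
  have w2: "1/2 \<le> cos (2*y)"
  proof -
    have "cos (pi/3) \<le> cos (2*y)" using y by (intro cos_monotone_0_pi_le) auto
    then show ?thesis by (simp add: cos_60)
  qed
  have "sin y ^ 2 = sin y powr 2" using sy by (simp add: powr_realpow)
  then have e2: "sin y powr P = (sin y ^ 2) powr (P/2)" by (simp add: powr_powr)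
  have e3: "sin y ^ 2 = (1 - cos (2*y))/2" by (simp add: cos_double_sin)
  have "2 * ((1 - cos (2*y))/2) powr (P/2) + cos (2*y) powr P \<ge> 1"
    by (rule Gnonneg[OF P3 P w2 w1])
  then show ?thesis unfolding e1 e2 e3 .
qed

lemma three_sorted:
  fixes P a b c :: real
  assumes P3: "2 powr P = 3" and P: "4/3 \<le> P" "P \<le> 2"
    and abc: "0 < a" "a \<le> b" "b \<le> c" "a + b + c = pi/2"
  shows "sin a powr P + sin b powr P + sin c powr P \<ge> 1"
proof -
  define f where "f x = sin x powr P" for x
  define s where "s = pi/6"
  have conv: "convex_on {0<..s} f" unfolding f_def[abs_def] s_def using sinpow_convex P by simp
  have fs: "f s = 1/3"
    using P3 by (simp add: f_def s_def sin_30 powr_divide)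
  have F: "2 * f y + f (pi/2 - 2*y) \<ge> 1" if "0 < y" "y \<le> s" for y
    using Fbound[OF P3 P, of y] that by (simp add: f_def s_def)
  have as: "a \<le> s" using abc by (simp add: s_def)
  show ?thesis
  proof (cases "b \<le> s")
    case True
    define y where "y = (a + b)/2"
    have y: "0 < y" "y \<le> s" using abc True as by (auto simp: y_def)
    have "f ((1/2) *\<^sub>R a + (1/2) *\<^sub>R b) \<le> (1/2) * f a + (1/2) * f b"
      using convex_onD[OF conv, of "1/2" a b] abc True as by auto
    then have "2 * f y \<le> f a + f b" by (simp add: y_def field_simps)
    moreover have "c = pi/2 - 2*y" using abc unfolding y_def by (simp add: field_simps)
    ultimately show ?thesis using F[OF y] by (simp add: f_def)
  next
    case False
    have as2: "a < s" using abc False by (simp add: s_def)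
    define yb where "yb = (a + c)/2"
    define yc where "yc = (a + b)/2"
    have yb: "a \<le> yb" "yb \<le> s" using abc False by (auto simp: yb_def s_def)
    have yc: "a \<le> yc" "yc \<le> s" using abc False by (auto simp: yc_def s_def)
    have Fb: "2 * f yb + f b \<ge> 1"
    proof -
      have "b = pi/2 - 2*yb" using abc unfolding yb_def by (simp add: field_simps)
      then show ?thesis using F[of yb] yb abc by simp
    qed
    have Fc: "2 * f yc + f c \<ge> 1"
    proof -
      have "c = pi/2 - 2*yc" using abc unfolding yc_def by (simp add: field_simps)
      then show ?thesis using F[of yc] yc abc by simp
    qed
    have cv: "f y \<le> (1 - (y - a)/(s - a)) * f a + ((y - a)/(s - a)) * f s"
      if "a \<le> y" "y \<le> s" for y
    proof -
      have t: "0 \<le> (y - a)/(s - a)" "(y - a)/(s - a) \<le> 1" using that as2 by auto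
      have "f ((1 - (y - a)/(s - a)) *\<^sub>R a + ((y - a)/(s - a)) *\<^sub>R s)
          \<le> (1 - (y - a)/(s - a)) * f a + ((y - a)/(s - a)) * f s"
        using convex_onD[OF conv t, of a s] abc as2 by auto
      then show ?thesis using affine_rep[OF as2, of y] by simp
    qed
    define lb where "lb = (yb - a)/(s - a)"
    define lc where "lc = (yc - a)/(s - a)"
    have cb: "f yb \<le> (1 - lb) * f a + lb * f s" using cv[OF yb] by (simp add: lb_def)
    have cc: "f yc \<le> (1 - lc) * f a + lc * f s" using cv[OF yc] by (simp add: lc_def)
    have h0: "lb + lc = (yb + yc - 2*a)/(s - a)" by (simp add: lb_def lc_def add_divide_distrib[symmetric])
    have h: "yb + yc - 2*a = 3/2 * (s - a)" using abc by (simp add: yb_def yc_def s_def field_simps)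
    have "lb + lc = (3/2 * (s - a))/(s - a)" using h0 by (simp only: h)
    moreover have ne: "s - a \<noteq> 0" using as2 by simp
    ultimately have lsum: "lb + lc = 3/2" by (simp only: nonzero_mult_div_cancel_right[OF ne])
    have "2 * f yb + 2 * f yc \<le> (4 - 2*(lb + lc)) * f a + 2*(lb + lc) * f s"
      using cb cc by (simp add: algebra_simps)
    also have "\<dots> = (4 - 2*(3/2)) * f a + 2*(3/2) * f s" by (simp only: lsum)
    also have "\<dots> = f a + 1" using fs by simp
    finally have "2 * f yb + 2 * f yc \<le> f a + 1" .
    then show ?thesis using Fb Fc by (simp add: f_def)
  qed
qed

lemma three_angles:
  fixes P a b c :: real
  assumes P3: "2 powr P = 3" and P: "4/3 \<le> P" "P \<le> 2"
    and abc: "0 < a" "0 < b" "0 < c" "a + b + c = pi/2"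
  shows "sin a powr P + sin b powr P + sin c powr P \<ge> 1"
proof -
  note T = three_sorted[OF P3 P]
  consider "a \<le> b" "b \<le> c" | "a \<le> c" "c \<le> b" | "b \<le> a" "a \<le> c" | "b \<le> c" "c \<le> a"
    | "c \<le> a" "a \<le> b" | "c \<le> b" "b \<le> a" by linarith
  then show ?thesis
  proof cases
    case 1 then show ?thesis using T[of a b c] abc by simp
  next
    case 2 then show ?thesis using T[of a c b] abc by (simp add: ac_simps)
  next
    case 3 then show ?thesis using T[of b a c] abc by (simp add: ac_simps)
  next
    case 4 then show ?thesis using T[of b c a] abc by (simp add: ac_simps)
  next
    case 5 then show ?thesis using T[of c a b] abc by (simp add: ac_simps)
  next
    case 6 then show ?thesis using T[of c b a] abc by (simp add: ac_simps)
  qed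
qed

theorem lemma2p10:
  fixes \<rho> :: real
  assumes "0 < \<rho>" and "\<rho> < pi / 6"
  shows "(\<forall>p \<theta>. 0 < p \<and> p \<le> 2 \<and> \<theta> \<in> {pi/2 + \<rho> .. pi} \<longrightarrow> Delta \<rho> p \<theta> \<ge> 1)
       \<and> (\<forall>p \<theta>i \<theta>j. 0 < p \<and> p \<le> ln 3 / ln 2 \<and> \<theta>i \<in> {pi/2 + \<rho> .. pi}
            \<and> \<theta>j \<in> {2 * \<rho> .. pi/2 - \<rho>} \<longrightarrow> Delta \<rho> p \<theta>i + Delta \<rho> p \<theta>j \<ge> 2)"
proof -
  define P :: real where "P = ln 3 / ln 2"
  have ln2: "0 < ln (2::real)" by simp
  have P3: "2 powr P = 3" by (simp add: powr_def P_def)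
  have "4 * ln (2::real) \<le> 3 * ln 3"
  proof -
    have "ln ((2::real) ^ 4) \<le> ln ((3::real) ^ 3)" by simp
    moreover have "ln ((2::real) ^ 4) = 4 * ln 2" using ln_realpow[of "2::real" 4] by simp
    moreover have "ln ((3::real) ^ 3) = 3 * ln 3" using ln_realpow[of "3::real" 3] by simp
    ultimately show ?thesis by linarith
  qed
  then have P1: "4/3 \<le> P" using ln2 by (simp add: P_def field_simps)
  have "ln (3::real) \<le> 2 * ln 2"
  proof -
    have "ln (3::real) \<le> ln ((2::real) ^ 2)" by simp
    moreover have "ln ((2::real) ^ 2) = 2 * ln 2" using ln_realpow[of "2::real" 2] by simp
    ultimately show ?thesis by linarith
  qed
  then have P2: "P \<le> 2" using ln2 by (simp add: P_def field_simps)
  have r: "0 < \<rho>" "\<rho> < pi/2" using assms by auto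
  have D1: "Delta \<rho> p \<theta> \<ge> 1 + sin \<rho> powr p" if p: "0 < p" "p \<le> 2" and th: "\<theta> \<in> {pi/2 + \<rho> .. pi}" for p \<theta>
  proof -
    define A where "A = pi - \<theta> + \<rho>"
    define B where "B = \<theta> - pi/2"
    have A: "\<rho> \<le> A" "A \<le> pi/2" using th by (auto simp: A_def)
    have B: "\<rho> \<le> B" "B \<le> pi/2" using th by (auto simp: B_def)
    have sA: "0 \<le> sin A" using A r by (intro sin_ge_zero) auto
    have sB: "0 \<le> sin B" using B r by (intro sin_ge_zero) auto
    have e1: "cos (\<theta> - (pi/2 + \<rho>)) = sin A"
    proof -
      have "\<theta> - (pi/2 + \<rho>) = pi/2 - A" by (simp add: A_def)
      then have "cos (\<theta> - (pi/2 + \<rho>)) = cos (pi/2 - A)" by (simp only:)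
      then show ?thesis by (simp add: cos_diff)
    qed
    have e2: "cos (\<theta> - 0) = - sin B"
    proof -
      have "\<theta> - 0 = B + pi/2" by (simp add: B_def)
      then have "cos (\<theta> - 0) = cos (B + pi/2)" by (simp only:)
      then show ?thesis by (simp add: cos_add)
    qed
    have "Delta \<rho> p \<theta> = sin A powr p + sin B powr p"
      unfolding Delta_def e1 e2 using sA sB by simp
    moreover have "sin A powr p + sin B powr p \<ge> 1 + sin \<rho> powr p"
      using gbound[OF p r A B] by (simp add: A_def B_def)
    ultimately show ?thesis by simp
  qed
  have part1: "\<forall>p \<theta>. 0 < p \<and> p \<le> 2 \<and> \<theta> \<in> {pi/2 + \<rho> .. pi} \<longrightarrow> Delta \<rho> p \<theta> \<ge> 1"
  proof (intro allI impI)
    fix p \<theta> :: real assume h: "0 < p \<and> p \<le> 2 \<and> \<theta> \<in> {pi/2 + \<rho> .. pi}"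
    have "0 \<le> sin \<rho> powr p" by simp
    then show "Delta \<rho> p \<theta> \<ge> 1" using D1[of p \<theta>] h by linarith
  qed
  have mono: "Delta \<rho> p \<theta> \<ge> Delta \<rho> P \<theta>" if "0 < p" "p \<le> P" for p \<theta>
  proof -
    have "\<bar>cos x\<bar> powr P \<le> \<bar>cos x\<bar> powr p" for x
      using that by (intro powr_mono') (auto simp: abs_cos_le_one)
    then show ?thesis unfolding Delta_def by (intro add_mono)
  qed
  have D2: "Delta \<rho> P \<theta> \<ge> 1 - sin \<rho> powr P" if th: "\<theta> \<in> {2 * \<rho> .. pi/2 - \<rho>}" for \<theta>
  proof -
    define u where "u = \<theta> - \<rho>"
    define w where "w = pi/2 - \<theta>"
    have u: "\<rho> \<le> u" "u \<le> pi/2" using th r by (auto simp: u_def)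
    have w: "\<rho> \<le> w" "w \<le> pi/2" using th r by (auto simp: w_def)
    have su: "0 \<le> sin u" using u r by (intro sin_ge_zero) auto
    have sw: "0 \<le> sin w" using w r by (intro sin_ge_zero) auto
    have e1: "cos (\<theta> - (pi/2 + \<rho>)) = sin u"
    proof -
      have "\<theta> - (pi/2 + \<rho>) = u - pi/2" by (simp add: u_def)
      then have "cos (\<theta> - (pi/2 + \<rho>)) = cos (u - pi/2)" by (simp only:)
      then show ?thesis by (simp add: cos_diff)
    qed
    have e2: "cos (\<theta> - 0) = sin w" by (simp add: w_def sin_diff)
    have "Delta \<rho> P \<theta> = sin u powr P + sin w powr P"
      unfolding Delta_def e1 e2 using su sw by simp
    moreover have "sin \<rho> powr P + sin u powr P + sin w powr P \<ge> 1"
      using three_angles[OF P3 P1 P2, of \<rho> u w] r u w by (simp add: u_def w_def)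
    ultimately show ?thesis by simp
  qed
  have part2: "\<forall>p \<theta>i \<theta>j. 0 < p \<and> p \<le> ln 3 / ln 2 \<and> \<theta>i \<in> {pi/2 + \<rho> .. pi}
            \<and> \<theta>j \<in> {2 * \<rho> .. pi/2 - \<rho>} \<longrightarrow> Delta \<rho> p \<theta>i + Delta \<rho> p \<theta>j \<ge> 2"
  proof (intro allI impI)
    fix p \<theta>i \<theta>j :: real assume h: "0 < p \<and> p \<le> ln 3 / ln 2 \<and> \<theta>i \<in> {pi/2 + \<rho> .. pi}
            \<and> \<theta>j \<in> {2 * \<rho> .. pi/2 - \<rho>}"
    then have hp: "0 < p" "p \<le> P" by (auto simp: P_def)
    have "Delta \<rho> p \<theta>i \<ge> Delta \<rho> P \<theta>i" by (rule mono[OF hp])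
    moreover have "Delta \<rho> p \<theta>j \<ge> Delta \<rho> P \<theta>j" by (rule mono[OF hp])
    moreover have "Delta \<rho> P \<theta>i \<ge> 1 + sin \<rho> powr P" using D1[of P \<theta>i] h P1 P2 by auto
    moreover have "Delta \<rho> P \<theta>j \<ge> 1 - sin \<rho> powr P" using D2[of \<theta>j] h by auto
    ultimately show "Delta \<rho> p \<theta>i + Delta \<rho> p \<theta>j \<ge> 2" by linarith
  qed
  show ?thesis using part1 part2 by blast
qed

end
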